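(* Let $T$ be an arbitrary triangle and let $\Gamma_{h,T}$ be an arbitrary open line segment with endpoints on $\partial T$ dividing $T$ into two nonempty open parts $T_h^+$ and $T_h^-$; let $\mathbf{n}_h$ be the unit normal of $\Gamma_{h,T}$ pointing into $T_h^+$. Let $w(\mathbf{x})=\operatorname{dist}(\mathbf{x},\Gamma_{h,T})$ for $\mathbf{x}\in T_h^+$ and $w(\mathbf{x})=0$ for $\mathbf{x}\in T_h^-$. Then $$0\le \nabla\pi^{CR}_{h,T}w\cdot\mathbf{n}_h\le 1.$$
   Context: $\pi^{CR}_{h,T}w$ is the unique linear polynomial on $T$ with $\int_{e_i}\pi^{CR}_{h,T}w=\int_{e_i}w$ for the three edges $e_i$ of $T$ (so $\nabla\pi^{CR}_{h,T}w$ is a constant vector). *)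

theory Defs
  imports "HOL-Analysis.Analysis"
begin

definition edge_integral :: "real^2 \<Rightarrow> real^2 \<Rightarrow> (real^2 \<Rightarrow> real) \<Rightarrow> real" where
  "edge_integral a b f = norm (b - a) * integral {0..1} (\<lambda>t. f (a + t *\<^sub>R (b - a)))"

text \<open>The Crouzeix--Raviart interpolant on the triangle with vertices a b c is the unique
  linear polynomial x \<mapsto> g \<bullet> x + d matching the edge integrals of w; this is its
  (constant) gradient g.\<close>
definition cr_grad :: "real^2 \<Rightarrow> real^2 \<Rightarrow> real^2 \<Rightarrow> (real^2 \<Rightarrow> real) \<Rightarrow> real^2" where
  "cr_grad a b c w = (THE g. \<exists>d.
      edge_integral a b (\<lambda>x. g \<bullet> x + d) = edge_integral a b w \<and>
      edge_integral b c (\<lambda>x. g \<bullet> x + d) = edge_integral b c w \<and>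
      edge_integral c a (\<lambda>x. g \<bullet> x + d) = edge_integral c a w)"

end

theory Submission
  imports Defs
begin

lemma img01:
  fixes a b :: real assumes "a < b"
  shows "(\<lambda>x. (1 / (b-a)) *\<^sub>R x + -((1 / (b-a)) *\<^sub>R a)) ` {a..b} = {0..1}"
proof -
  have e: "(\<lambda>x. (1 / (b-a)) *\<^sub>R x + -((1 / (b-a)) *\<^sub>R a)) = (\<lambda>x. x/(b-a) - a/(b-a))"
    by (auto simp: fun_eq_iff divide_simps)
  have "b/(b-a) - a/(b-a) = 1" using assms by (simp add: diff_divide_distrib[symmetric])
  then show ?thesis unfolding e image_affinity_atLeastAtMost_div_diff using assms by auto
qed

lemma sub_aff:
  fixes \<phi> :: "real \<Rightarrow> real"
  assumes "a < b" and int: "\<phi> integrable_on {a..b}"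
  shows "integral {0..1} (\<lambda>t. \<phi> (a + t*(b-a))) = integral {a..b} \<phi> / (b - a)"
proof -
  from int have h: "(\<phi> has_integral integral {a..b} \<phi>) (cbox a b)"
    by (simp add: integrable_integral)
  have "((\<lambda>x. \<phi> ((b-a) *\<^sub>R x + a)) has_integral (1 / (\<bar>b-a\<bar> ^ DIM(real))) *\<^sub>R integral {a..b} \<phi>)
     ((\<lambda>x. (1 / (b-a)) *\<^sub>R x + -((1 / (b-a)) *\<^sub>R a)) ` cbox a b)"
    by (rule has_integral_affinity[OF h]) (use assms in simp)
  then have "((\<lambda>t. \<phi> (a + t*(b-a))) has_integral (1 / (b-a)) * integral {a..b} \<phi>) {0..1}"
    using img01[OF assms(1)] assms(1) by (simp add: algebra_simps)
  then show ?thesis by (simp add: integral_unique)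
qed

lemma int_rev:
  fixes \<phi> :: "real \<Rightarrow> real"
  shows "integral {0..1} (\<lambda>t. \<phi> (1 - t)) = integral {0..1} \<phi>"
proof -
  have "integral {0..1} (\<lambda>t. \<phi> (1 - t)) = integral {-1..0} (\<lambda>x. (\<lambda>t. \<phi> (1 - t)) (x + 1))"
    using integral_shift_real_ivl[where f="\<lambda>t. \<phi> (1 - t)" and a=0 and b=1 and c=1] by simp
  also have "\<dots> = integral {-1..0} (\<lambda>x. \<phi> (- x))" by simp
  also have "\<dots> = integral {0..1} \<phi>" using Henstock_Kurzweil_Integration.integral_reflect_real[where a=0 and b=1 and f=\<phi>] by simp
  finally show ?thesis .
qed

lemma int_split:
  fixes \<phi> :: "real \<Rightarrow> real"
  assumes c: "continuous_on {0..1} \<phi>" and t: "0 \<le> \<tau>" "\<tau> \<le> 1"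
  shows "integral {0..1} \<phi> = \<tau> * integral {0..1} (\<lambda>t. \<phi> (\<tau> * t))
          + (1 - \<tau>) * integral {0..1} (\<lambda>t. \<phi> (\<tau> + t * (1 - \<tau>)))"
proof -
  have i: "\<phi> integrable_on {0..1}" using c by (rule integrable_continuous_real)
  have A: "\<tau> * integral {0..1} (\<lambda>t. \<phi> (\<tau> * t)) = integral {0..\<tau>} \<phi>"
  proof (cases "\<tau> = 0")
    case False
    then have "integral {0..1} (\<lambda>t. \<phi> (0 + t * (\<tau> - 0))) = integral {0..\<tau>} \<phi> / (\<tau> - 0)"
      using t by (intro sub_aff integrable_subinterval_real[OF i]) auto
    then show ?thesis using False by (simp add: mult.commute)
  qed simp
  have B: "(1 - \<tau>) * integral {0..1} (\<lambda>t. \<phi> (\<tau> + t * (1 - \<tau>))) = integral {\<tau>..1} \<phi>"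
  proof (cases "\<tau> = 1")
    case False
    then have "integral {0..1} (\<lambda>t. \<phi> (\<tau> + t * (1 - \<tau>))) = integral {\<tau>..1} \<phi> / (1 - \<tau>)"
      using t by (intro sub_aff integrable_subinterval_real[OF i]) auto
    then show ?thesis using False by simp
  qed simp
  show ?thesis unfolding A B using Henstock_Kurzweil_Integration.integral_combine[OF t i] by simp
qed


definition Iseg :: "real^2 \<Rightarrow> real^2 \<Rightarrow> (real^2 \<Rightarrow> real) \<Rightarrow> real" where
  "Iseg A B f = integral {0..1} (\<lambda>t. f (A + t *\<^sub>R (B - A)))"

definition FF :: "real^2 \<Rightarrow> real^2 \<Rightarrow> real^2 \<Rightarrow> real^2 \<Rightarrow> (real^2 \<Rightarrow> real) \<Rightarrow> real" where
  "FF a b c m f = ((b-a) \<bullet> m) * Iseg a b f + ((c-b) \<bullet> m) * Iseg b c f + ((a-c) \<bullet> m) * Iseg c a f"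

definition rot :: "real^2 \<Rightarrow> real^2" where
  "rot n = vector [-(n$2), n$1]"

lemma inner2: "(x::real^2) \<bullet> y = x$1*y$1 + x$2*y$2"
  by (simp add: inner_vec_def sum_2)

lemma decomp:
  assumes "n \<bullet> n = 1"
  shows "x = (x \<bullet> rot n) *\<^sub>R rot n + (x \<bullet> n) *\<^sub>R n"
proof -
  have "n$1*n$1 + n$2*n$2 = 1" using assms by (simp add: inner2)
  then show ?thesis
    unfolding vec_eq_iff forall_2 by (simp add: rot_def inner2) algebra
qed

lemma Iseg_rev: "Iseg B A f = Iseg A B f"
proof -
  have "Iseg B A f = integral {0..1} (\<lambda>t. (\<lambda>s. f (A + s *\<^sub>R (B - A))) (1 - t))"
    unfolding Iseg_def by (rule arg_cong[where f="integral _"]) (auto simp: fun_eq_iff algebra_simps)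
  also have "\<dots> = Iseg A B f" unfolding Iseg_def by (rule int_rev)
  finally show ?thesis .
qed

lemma Iseg_affine: "Iseg A B (\<lambda>x. g \<bullet> x + d) = g \<bullet> A + (g \<bullet> (B - A)) / 2 + d"
proof -
  have c: "((\<lambda>t. g \<bullet> A + d) has_integral (g \<bullet> A + d)) {0..1::real}"
    using has_integral_const_real[of "g \<bullet> A + d" 0 1] by simp
  have X: "((\<lambda>t. (g \<bullet> A + d) + t * (g \<bullet> (B - A))) has_integral ((g \<bullet> A + d) + ((1\<^sup>2 - 0\<^sup>2)/2) * (g \<bullet> (B - A)))) {0..1}"
    by (intro has_integral_add c has_integral_mult_left ident_has_integral) simp
  have e1: "(\<lambda>t. (g \<bullet> A + d) + t * (g \<bullet> (B - A))) = (\<lambda>t. g \<bullet> (A + t *\<^sub>R (B - A)) + d)"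
    by (auto simp: fun_eq_iff inner_add_right algebra_simps)
  have e2: "(g \<bullet> A + d) + ((1\<^sup>2 - 0\<^sup>2)/2) * (g \<bullet> (B - A)) = g \<bullet> A + (g \<bullet> (B - A)) / 2 + d"
    by simp
  have "((\<lambda>t. g \<bullet> (A + t *\<^sub>R (B - A)) + d) has_integral (g \<bullet> A + (g \<bullet> (B - A)) / 2 + d)) {0..1}"
    using X unfolding e1 e2 .
  then show ?thesis unfolding Iseg_def by (rule integral_unique)
qed

lemma FF_cyc: "FF b c a m f = FF a b c m f"
  unfolding FF_def by simp

lemma FF_swap: "FF a c b m f = - FF a b c m f"
  unfolding FF_def using Iseg_rev[of a b f] Iseg_rev[of b c f] Iseg_rev[of c a f]
  by (simp add: inner_diff_left algebra_simps)

lemma seg_in: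
  assumes "convex H" "A \<in> H" "B \<in> H" "0 \<le> t" "t \<le> 1"
  shows "A + t *\<^sub>R (B - A) \<in> H"
proof -
  have "(1 - t) *\<^sub>R A + t *\<^sub>R B \<in> H" using assms by (intro convexD) auto
  then show ?thesis by (simp add: algebra_simps)
qed

lemma seg_cont:
  fixes A B :: "real^2" and f :: "real^2 \<Rightarrow> real"
  assumes "convex H" "A \<in> H" "B \<in> H" "continuous_on H f"
  shows "continuous_on {0..1} (\<lambda>t. f (A + t *\<^sub>R (B - A)))"
proof -
  have c1: "continuous_on {0..1::real} (\<lambda>t. A + t *\<^sub>R (B - A))" by (intro continuous_intros)
  have c2: "(\<lambda>t. A + t *\<^sub>R (B - A)) ` {0..1} \<subseteq> H" using seg_in[OF assms(1-3)] by auto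
  show ?thesis by (rule continuous_on_compose2[OF assms(4) c1 c2])
qed

lemma seg_int:
  fixes A B :: "real^2" and f :: "real^2 \<Rightarrow> real"
  assumes "convex H" "A \<in> H" "B \<in> H" "continuous_on H f"
  shows "(\<lambda>t. f (A + t *\<^sub>R (B - A))) integrable_on {0..1}"
  by (rule integrable_continuous_real[OF seg_cont[OF assms]])


definition kap :: "real^2 \<Rightarrow> real^2 \<Rightarrow> real^2 \<Rightarrow> real^2 \<Rightarrow> real" where
  "kap v1 v2 v3 n = ((v1 + ((v2 \<bullet> rot n - v1 \<bullet> rot n) / (v3 \<bullet> rot n - v1 \<bullet> rot n)) *\<^sub>R (v3 - v1)) - v2) \<bullet> n"

lemma sorted_sign:
  fixes v1 v2 v3 n :: "real^2" and f :: "real^2 \<Rightarrow> real"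
  assumes nn: "n \<bullet> n = 1"
    and s12: "v1 \<bullet> rot n \<le> v2 \<bullet> rot n" and s23: "v2 \<bullet> rot n \<le> v3 \<bullet> rot n"
    and cont: "continuous_on (convex hull {v1,v2,v3}) f"
    and mono: "\<And>x t. x \<in> convex hull {v1,v2,v3} \<Longrightarrow> 0 \<le> t \<Longrightarrow> x + t *\<^sub>R n \<in> convex hull {v1,v2,v3}
                  \<Longrightarrow> f x \<le> f (x + t *\<^sub>R n)"
  shows "(0 \<le> kap v1 v2 v3 n \<longrightarrow> FF v1 v2 v3 (rot n) f \<le> 0) \<and> (kap v1 v2 v3 n \<le> 0 \<longrightarrow> 0 \<le> FF v1 v2 v3 (rot n) f)"
proof (cases "v1 \<bullet> rot n = v3 \<bullet> rot n")
  case True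
  then have "FF v1 v2 v3 (rot n) f = 0" using s12 s23 unfolding FF_def by (simp add: inner_diff_left)
  then show ?thesis by simp
next
  case False
  define m where "m = rot n"
  define H where "H = convex hull {v1,v2,v3}"
  define s1 where "s1 = v1 \<bullet> m"
  define s2 where "s2 = v2 \<bullet> m"
  define s3 where "s3 = v3 \<bullet> m"
  define \<tau> where "\<tau> = (s2 - s1) / (s3 - s1)"
  define u where "u = v1 + \<tau> *\<^sub>R (v3 - v1)"
  define \<kappa> where "\<kappa> = kap v1 v2 v3 n"
  have lt: "s1 < s3" using False s12 s23 unfolding s1_def s3_def m_def by linarith
  have t0: "0 \<le> \<tau>" and t1: "\<tau> \<le> 1" using lt s12 s23 unfolding \<tau>_def s1_def s2_def s3_def m_def
    by (auto simp: divide_simps)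
  have cH: "convex H" unfolding H_def by (rule convex_convex_hull)
  have v1H: "v1 \<in> H" and v2H: "v2 \<in> H" and v3H: "v3 \<in> H" unfolding H_def by (auto intro: hull_inc)
  have uH: "u \<in> H" unfolding u_def by (rule seg_in[OF cH v1H v3H t0 t1])
  have contH: "continuous_on H f" using cont unfolding H_def .
  have kdef: "\<kappa> = (u - v2) \<bullet> n" unfolding \<kappa>_def kap_def u_def \<tau>_def s1_def s2_def s3_def m_def ..
  have um: "(u - v2) \<bullet> m = 0"
    using lt unfolding u_def \<tau>_def s1_def s2_def s3_def by (simp add: inner_diff_left inner_add_left field_simps)
  have uk: "u - v2 = \<kappa> *\<^sub>R n"
    using decomp[OF nn, of "u - v2"] um kdef unfolding m_def by simp
  define I12 where "I12 = Iseg v1 v2 f"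
  define I23 where "I23 = Iseg v2 v3 f"
  define J1 where "J1 = Iseg v1 u f"
  define J2 where "J2 = Iseg u v3 f"
  have split: "Iseg v1 v3 f = \<tau> * J1 + (1 - \<tau>) * J2"
  proof -
    have "Iseg v1 v3 f = \<tau> * integral {0..1} (\<lambda>t. f (v1 + (\<tau> * t) *\<^sub>R (v3 - v1)))
          + (1 - \<tau>) * integral {0..1} (\<lambda>t. f (v1 + (\<tau> + t * (1 - \<tau>)) *\<^sub>R (v3 - v1)))"
      unfolding Iseg_def by (rule int_split[OF seg_cont[OF cH v1H v3H contH] t0 t1])
    moreover have "(\<lambda>t. f (v1 + (\<tau> * t) *\<^sub>R (v3 - v1))) = (\<lambda>t. f (v1 + t *\<^sub>R (u - v1)))"
      unfolding u_def by (simp add: algebra_simps)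
    moreover have "(\<lambda>t. f (v1 + (\<tau> + t * (1 - \<tau>)) *\<^sub>R (v3 - v1))) = (\<lambda>t. f (u + t *\<^sub>R (v3 - u)))"
      unfolding u_def by (simp add: algebra_simps)
    ultimately show ?thesis unfolding J1_def J2_def Iseg_def by simp
  qed
  have FFe: "FF v1 v2 v3 (rot n) f = (s2 - s1) * (I12 - J1) + (s3 - s2) * (I23 - J2)"
  proof -
    have "FF v1 v2 v3 (rot n) f = (s2 - s1) * I12 + (s3 - s2) * I23 - (s3 - s1) * Iseg v1 v3 f"
      unfolding FF_def I12_def I23_def s1_def s2_def s3_def m_def using Iseg_rev[of v3 v1 f]
      by (simp add: inner_diff_left algebra_simps)
    also have "(s3 - s1) * Iseg v1 v3 f = (s2 - s1) * J1 + (s3 - s2) * J2"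
    proof -
      have a1: "\<tau> * (s3 - s1) = s2 - s1" using lt by (simp add: \<tau>_def)
      have a2: "(1 - \<tau>) * (s3 - s1) = s3 - s2" using a1 by (simp add: algebra_simps)
      have "(s3 - s1) * Iseg v1 v3 f = (\<tau> * (s3 - s1)) * J1 + ((1 - \<tau>) * (s3 - s1)) * J2"
        unfolding split by (simp add: algebra_simps)
      then show ?thesis unfolding a1 a2 .
    qed
    finally show ?thesis by (simp add: algebra_simps)
  qed
  have P1: "v1 + t *\<^sub>R (u - v1) = (v1 + t *\<^sub>R (v2 - v1)) + (t * \<kappa>) *\<^sub>R n" for t
    using uk by (simp add: algebra_simps)
  have P2: "u + t *\<^sub>R (v3 - u) = (v2 + t *\<^sub>R (v3 - v2)) + ((1 - t) * \<kappa>) *\<^sub>R n" for t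
  proof -
    have "((1 - t) * \<kappa>) *\<^sub>R n = (1 - t) *\<^sub>R (u - v2)" using uk by simp
    then show ?thesis by (simp add: algebra_simps)
  qed
  have i12: "(\<lambda>t. f (v1 + t *\<^sub>R (v2 - v1))) integrable_on {0..1}" by (rule seg_int[OF cH v1H v2H contH])
  have i23: "(\<lambda>t. f (v2 + t *\<^sub>R (v3 - v2))) integrable_on {0..1}" by (rule seg_int[OF cH v2H v3H contH])
  have j1: "(\<lambda>t. f (v1 + t *\<^sub>R (u - v1))) integrable_on {0..1}" by (rule seg_int[OF cH v1H uH contH])
  have j2: "(\<lambda>t. f (u + t *\<^sub>R (v3 - u))) integrable_on {0..1}" by (rule seg_int[OF cH uH v3H contH])
  have A: "I12 \<le> J1 \<and> I23 \<le> J2" if k: "0 \<le> \<kappa>"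
  proof
    show "I12 \<le> J1" unfolding I12_def J1_def Iseg_def
    proof (rule integral_le[OF i12 j1])
      fix t :: real assume "t \<in> {0..1}"
      then show "f (v1 + t *\<^sub>R (v2 - v1)) \<le> f (v1 + t *\<^sub>R (u - v1))"
        unfolding P1 using k seg_in[OF cH v1H v2H] seg_in[OF cH v1H uH]
        by (intro mono[folded H_def]) (auto simp: P1[symmetric])
    qed
    show "I23 \<le> J2" unfolding I23_def J2_def Iseg_def
    proof (rule integral_le[OF i23 j2])
      fix t :: real assume "t \<in> {0..1}"
      then show "f (v2 + t *\<^sub>R (v3 - v2)) \<le> f (u + t *\<^sub>R (v3 - u))"
        unfolding P2 using k seg_in[OF cH v2H v3H] seg_in[OF cH uH v3H]
        by (intro mono[folded H_def]) (auto simp: P2[symmetric])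
    qed
  qed
  have B: "J1 \<le> I12 \<and> J2 \<le> I23" if k: "\<kappa> \<le> 0"
  proof
    show "J1 \<le> I12" unfolding I12_def J1_def Iseg_def
    proof (rule integral_le[OF j1 i12])
      fix t :: real assume t: "t \<in> {0..1}"
      have e: "v1 + t *\<^sub>R (v2 - v1) = (v1 + t *\<^sub>R (u - v1)) + (- (t * \<kappa>)) *\<^sub>R n"
        unfolding P1 by (simp add: algebra_simps)
      have m1: "v1 + t *\<^sub>R (u - v1) \<in> H" using t seg_in[OF cH v1H uH] by auto
      have m2: "(v1 + t *\<^sub>R (u - v1)) + (- (t * \<kappa>)) *\<^sub>R n \<in> H"
        using t seg_in[OF cH v1H v2H] unfolding e[symmetric] by auto
      have "f (v1 + t *\<^sub>R (u - v1)) \<le> f ((v1 + t *\<^sub>R (u - v1)) + (- (t * \<kappa>)) *\<^sub>R n)"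
        by (rule mono[folded H_def, OF m1 _ m2]) (use t k in \<open>auto simp: mult_nonneg_nonpos\<close>)
      then show "f (v1 + t *\<^sub>R (u - v1)) \<le> f (v1 + t *\<^sub>R (v2 - v1))"
        unfolding e .
    qed
    show "J2 \<le> I23" unfolding I23_def J2_def Iseg_def
    proof (rule integral_le[OF j2 i23])
      fix t :: real assume t: "t \<in> {0..1}"
      have e: "v2 + t *\<^sub>R (v3 - v2) = (u + t *\<^sub>R (v3 - u)) + (- ((1 - t) * \<kappa>)) *\<^sub>R n"
        unfolding P2 by (simp add: algebra_simps)
      have m1: "u + t *\<^sub>R (v3 - u) \<in> H" using t seg_in[OF cH uH v3H] by auto
      have m2: "(u + t *\<^sub>R (v3 - u)) + (- ((1 - t) * \<kappa>)) *\<^sub>R n \<in> H"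
        using t seg_in[OF cH v2H v3H] unfolding e[symmetric] by auto
      have "f (u + t *\<^sub>R (v3 - u)) \<le> f ((u + t *\<^sub>R (v3 - u)) + (- ((1 - t) * \<kappa>)) *\<^sub>R n)"
        by (rule mono[folded H_def, OF m1 _ m2]) (use t k in \<open>auto simp: mult_nonneg_nonpos\<close>)
      then show "f (u + t *\<^sub>R (v3 - u)) \<le> f (v2 + t *\<^sub>R (v3 - v2))"
        unfolding e .
    qed
  qed
  have d1: "0 \<le> s2 - s1" "0 \<le> s3 - s2" using s12 s23 unfolding s1_def s2_def s3_def m_def by auto
  show ?thesis
  proof (intro conjI impI)
    assume "0 \<le> kap v1 v2 v3 n"
    then have "I12 - J1 \<le> 0" "I23 - J2 \<le> 0" using A unfolding \<kappa>_def by auto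
    then show "FF v1 v2 v3 (rot n) f \<le> 0" unfolding FFe using d1
      by (simp add: add_nonpos_nonpos mult_nonneg_nonpos)
  next
    assume "kap v1 v2 v3 n \<le> 0"
    then have "0 \<le> I12 - J1" "0 \<le> I23 - J2" using B unfolding \<kappa>_def by auto
    then show "0 \<le> FF v1 v2 v3 (rot n) f" unfolding FFe using d1 by simp
  qed
qed


lemma prod_sorted:
  fixes v1 v2 v3 n :: "real^2" and f g :: "real^2 \<Rightarrow> real"
  assumes nn: "n \<bullet> n = 1" and H: "H = convex hull {v1,v2,v3}"
    and s12: "v1 \<bullet> rot n \<le> v2 \<bullet> rot n" and s23: "v2 \<bullet> rot n \<le> v3 \<bullet> rot n"
    and cf: "continuous_on H f" and cg: "continuous_on H g"
    and mf: "\<And>x t. x \<in> H \<Longrightarrow> 0 \<le> t \<Longrightarrow> x + t *\<^sub>R n \<in> H \<Longrightarrow> f x \<le> f (x + t *\<^sub>R n)"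
    and mg: "\<And>x t. x \<in> H \<Longrightarrow> 0 \<le> t \<Longrightarrow> x + t *\<^sub>R n \<in> H \<Longrightarrow> g x \<le> g (x + t *\<^sub>R n)"
  shows "0 \<le> FF v1 v2 v3 (rot n) f * FF v1 v2 v3 (rot n) g"
proof -
  note F = sorted_sign[OF nn s12 s23 cf[unfolded H] mf[unfolded H]]
  note G = sorted_sign[OF nn s12 s23 cg[unfolded H] mg[unfolded H]]
  show ?thesis
  proof (cases "0 \<le> kap v1 v2 v3 n")
    case True
    then show ?thesis using F G by (simp add: mult_nonpos_nonpos)
  next
    case False
    then show ?thesis using F G by simp
  qed
qed

lemma FF_perms:
  "FF a c b m f = - FF a b c m f" "FF b a c m f = - FF a b c m f" "FF c b a m f = - FF a b c m f"
  "FF b c a m f = FF a b c m f" "FF c a b m f = FF a b c m f"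
proof -
  show 1: "FF a c b m f = - FF a b c m f" by (rule FF_swap)
  show 4: "FF b c a m f = FF a b c m f" by (rule FF_cyc)
  show 5: "FF c a b m f = FF a b c m f" using FF_cyc[of b c a m f] FF_cyc[of a b c m f] by simp
  show "FF b a c m f = - FF a b c m f" using FF_swap[of b c a m f] 4 by simp
  show "FF c b a m f = - FF a b c m f" using FF_swap[of c a b m f] 5 by simp
qed

lemma prod_any:
  fixes a b c n :: "real^2" and f g :: "real^2 \<Rightarrow> real"
  assumes nn: "n \<bullet> n = 1" and H: "H = convex hull {a,b,c}"
    and cf: "continuous_on H f" and cg: "continuous_on H g"
    and mf: "\<And>x t. x \<in> H \<Longrightarrow> 0 \<le> t \<Longrightarrow> x + t *\<^sub>R n \<in> H \<Longrightarrow> f x \<le> f (x + t *\<^sub>R n)"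
    and mg: "\<And>x t. x \<in> H \<Longrightarrow> 0 \<le> t \<Longrightarrow> x + t *\<^sub>R n \<in> H \<Longrightarrow> g x \<le> g (x + t *\<^sub>R n)"
  shows "0 \<le> FF a b c (rot n) f * FF a b c (rot n) g"
proof -
  have h: "H = convex hull {a,c,b}" "H = convex hull {b,a,c}" "H = convex hull {b,c,a}"
    "H = convex hull {c,a,b}" "H = convex hull {c,b,a}"
    unfolding H by (rule arg_cong[where f="\<lambda>S. convex hull S"], blast)+
  note S = prod_sorted[OF nn _ _ _ cf cg mf mg]
  consider "a \<bullet> rot n \<le> b \<bullet> rot n" "b \<bullet> rot n \<le> c \<bullet> rot n"
    | "a \<bullet> rot n \<le> c \<bullet> rot n" "c \<bullet> rot n \<le> b \<bullet> rot n"
    | "b \<bullet> rot n \<le> a \<bullet> rot n" "a \<bullet> rot n \<le> c \<bullet> rot n"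
    | "b \<bullet> rot n \<le> c \<bullet> rot n" "c \<bullet> rot n \<le> a \<bullet> rot n"
    | "c \<bullet> rot n \<le> a \<bullet> rot n" "a \<bullet> rot n \<le> b \<bullet> rot n"
    | "c \<bullet> rot n \<le> b \<bullet> rot n" "b \<bullet> rot n \<le> a \<bullet> rot n"
    by linarith
  then show ?thesis
  proof cases
    case 1 then show ?thesis using S[OF H] by simp
  next
    case 2 then show ?thesis using S[OF h(1)] unfolding FF_perms(1)[where a=a and b=b and c=c and m="rot n" and f=f] FF_perms(1)[where a=a and b=b and c=c and m="rot n" and f=g] by simp
  next
    case 3 then show ?thesis using S[OF h(2)] unfolding FF_perms(2)[where a=a and b=b and c=c and m="rot n" and f=f] FF_perms(2)[where a=a and b=b and c=c and m="rot n" and f=g] by simp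
  next
    case 4 then show ?thesis using S[OF h(3)] unfolding FF_perms(4)[where a=a and b=b and c=c and m="rot n" and f=f] FF_perms(4)[where a=a and b=b and c=c and m="rot n" and f=g] by simp
  next
    case 5 then show ?thesis using S[OF h(4)] unfolding FF_perms(5)[where a=a and b=b and c=c and m="rot n" and f=f] FF_perms(5)[where a=a and b=b and c=c and m="rot n" and f=g] by simp
  next
    case 6 then show ?thesis using S[OF h(5)] unfolding FF_perms(3)[where a=a and b=b and c=c and m="rot n" and f=f] FF_perms(3)[where a=a and b=b and c=c and m="rot n" and f=g] by simp
  qed
qed


lemma seg_perp:
  assumes "z \<in> open_segment p q" "n \<bullet> (q - p) = 0"
  shows "(z - p) \<bullet> n = 0"
proof -
  obtain u where z: "z = (1 - u) *\<^sub>R p + u *\<^sub>R q" using assms(1) by (auto simp: in_segment)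
  have "z - p = u *\<^sub>R (q - p)" unfolding z by (simp add: algebra_simps)
  then show ?thesis using assms(2) by (simp add: inner_commute)
qed

lemma line_in_seg:
  fixes p q n x :: "real^2" and T H :: "(real^2) set"
  assumes nn: "n \<bullet> n = 1" and pq: "p \<noteq> q" "n \<bullet> (q - p) = 0"
    and T: "T = interior H" and cH: "convex H" and clH: "closed H"
    and pT: "p \<notin> T" and qT: "q \<notin> T" and seg: "open_segment p q \<subseteq> T"
    and xH: "x \<in> H" and xl: "(x - p) \<bullet> n = 0"
  shows "infdist x (open_segment p q) = 0"
proof -
  define m where "m = rot n"
  have dq: "q - p = ((q - p) \<bullet> m) *\<^sub>R m" using decomp[OF nn, of "q - p"] pq(2) unfolding m_def
    by (simp add: inner_commute)
  have dx: "x - p = ((x - p) \<bullet> m) *\<^sub>R m" using decomp[OF nn, of "x - p"] xl unfolding m_def by simp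
  have sig: "(q - p) \<bullet> m \<noteq> 0"
  proof
    assume "(q - p) \<bullet> m = 0"
    then have "q - p = 0" using dq by simp
    then show False using pq(1) by simp
  qed
  define lam where "lam = ((x - p) \<bullet> m) / ((q - p) \<bullet> m)"
  have xe: "x = p + lam *\<^sub>R (q - p)"
  proof -
    have "lam *\<^sub>R (q - p) = ((x - p) \<bullet> m) *\<^sub>R m"
      by (subst dq) (use sig in \<open>simp add: lam_def\<close>)
    then have "x - p = lam *\<^sub>R (q - p)" using dx by simp
    then show ?thesis by (simp add: algebra_simps)
  qed
  define mid where "mid = (1 - 1/2) *\<^sub>R p + (1/2::real) *\<^sub>R q"
  have midS: "mid \<in> open_segment p q" unfolding in_segment(2) using pq(1)
    by (intro conjI exI[of _ "1/2"]) (auto simp: mid_def)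
  have midT: "mid \<in> interior H" using midS seg T by auto
  have xcl: "x \<in> closure H" using xH closure_subset by auto
  have sub: "open_segment mid x \<subseteq> interior H" by (rule in_interior_closure_convex_segment[OF cH midT xcl])
  have gen: "(1 - u) *\<^sub>R p + u *\<^sub>R q = p + u *\<^sub>R (q - p)" for u :: real
    by (simp add: algebra_simps)
  have midv: "mid = p + (1/2) *\<^sub>R (q - p)" unfolding mid_def by (rule gen)
  consider "lam < 0" | "0 \<le> lam \<and> lam \<le> 1" | "1 < lam" by linarith
  then show ?thesis
  proof cases
    case 2
    then have "x \<in> closed_segment p q" unfolding in_segment xe by (intro exI[of _ lam]) (auto simp: algebra_simps)
    then have "x \<in> closure (open_segment p q)" using pq(1) by simp
    then show ?thesis using in_closure_iff_infdist_zero[of "open_segment p q" x] midS pq(1) by auto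
  next
    case 1
    define u where "u = 1 / (1 - 2 * lam)"
    have u: "0 < u" "u < 1" using 1 unfolding u_def by (auto simp: divide_simps)
    have "p = (1 - u) *\<^sub>R mid + u *\<^sub>R x"
    proof -
      have "(1 - u) *\<^sub>R mid + u *\<^sub>R x = p + ((1 - u) / 2 + u * lam) *\<^sub>R (q - p)"
        unfolding midv xe by (simp add: algebra_simps)
      also have "(1 - u) / 2 + u * lam = 0" using 1 unfolding u_def by (simp add: field_simps)
      finally show ?thesis by simp
    qed
    moreover have "mid \<noteq> x"
    proof
      assume "mid = x"
      then have "(1/2 - lam) *\<^sub>R (q - p) = 0" unfolding midv xe by (simp add: algebra_simps)
      then show False using 1 pq(1) by simp
    qed
    ultimately have "p \<in> open_segment mid x" unfolding in_segment(2) using u by (intro conjI exI[of _ u]) auto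
    then have False using sub pT T by auto
    then show ?thesis ..
  next
    case 3
    define u where "u = 1 / (2 * lam - 1)"
    have u: "0 < u" "u < 1" using 3 unfolding u_def by (auto simp: divide_simps)
    have "q = (1 - u) *\<^sub>R mid + u *\<^sub>R x"
    proof -
      have "(1 - u) *\<^sub>R mid + u *\<^sub>R x = p + ((1 - u) / 2 + u * lam) *\<^sub>R (q - p)"
        unfolding midv xe by (simp add: algebra_simps)
      also have "(1 - u) / 2 + u * lam = 1"
      proof -
        have nz: "2 * lam - 1 \<noteq> 0" using 3 by simp
        have uu: "u * (2 * lam - 1) = 1" unfolding u_def using nz by simp
        have "(1 - u) / 2 + u * lam = 1/2 + (u * (2 * lam - 1)) / 2" by (simp add: field_simps)
        then show ?thesis unfolding uu by simp
      qed
      finally show ?thesis by simp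
    qed
    moreover have "mid \<noteq> x"
    proof
      assume "mid = x"
      then have "(1/2 - lam) *\<^sub>R (q - p) = 0" unfolding midv xe by (simp add: algebra_simps)
      then show False using 3 pq(1) by simp
    qed
    ultimately have "q \<in> open_segment mid x" unfolding in_segment(2) using u by (intro conjI exI[of _ u]) auto
    then have False using sub qT T by auto
    then show ?thesis ..
  qed
qed


lemma w_cont:
  fixes p q n :: "real^2" and H :: "(real^2) set"
  assumes line: "\<And>x. x \<in> H \<Longrightarrow> (x - p) \<bullet> n = 0 \<Longrightarrow> infdist x S = 0"
  shows "continuous_on H (\<lambda>x. if (x - p) \<bullet> n > 0 then infdist x S else 0)"
proof -
  have e: "(\<lambda>x. if (x - p) \<bullet> n > 0 then infdist x S else 0) = (\<lambda>x. if (x - p) \<bullet> n \<le> 0 then 0 else infdist x S)"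
    by (auto simp: fun_eq_iff not_less)
  show ?thesis unfolding e
  proof (rule continuous_on_cases_le)
    show "continuous_on {x \<in> H. (x - p) \<bullet> n \<le> 0} (\<lambda>x. 0::real)" by (rule continuous_on_const)
    show "continuous_on {x \<in> H. 0 \<le> (x - p) \<bullet> n} (\<lambda>x. infdist x S)"
      by (rule continuous_on_infdist[OF continuous_on_id])
    show "continuous_on H (\<lambda>x. (x - p) \<bullet> n)" by (intro continuous_intros)
    show "0 = infdist x S" if "x \<in> H" "(x - p) \<bullet> n = 0" for x using line[OF that] by simp
  qed
qed

lemma dist_mono_n:
  fixes x z n :: "real^2"
  assumes nn: "n \<bullet> n = 1" and pos: "0 < (x - z) \<bullet> n" and t: "0 \<le> t"
  shows "dist x z \<le> dist (x + t *\<^sub>R n) z"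
proof -
  have "(x - z) \<bullet> (x - z) \<le> (x + t *\<^sub>R n - z) \<bullet> (x + t *\<^sub>R n - z)"
  proof -
    have "(x + t *\<^sub>R n - z) \<bullet> (x + t *\<^sub>R n - z) = (x - z) \<bullet> (x - z) + 2 * t * ((x - z) \<bullet> n) + t * t * (n \<bullet> n)"
      by (simp add: inner_add_left inner_add_right inner_diff_left inner_diff_right inner_commute algebra_simps)
    then show ?thesis using pos t nn by simp
  qed
  then show ?thesis unfolding dist_norm norm_le .
qed

lemma w_mono:
  fixes p q n :: "real^2" and H :: "(real^2) set"
  assumes nn: "n \<bullet> n = 1" and cH: "convex H"
    and line: "\<And>x. x \<in> H \<Longrightarrow> (x - p) \<bullet> n = 0 \<Longrightarrow> infdist x S = 0"
    and perp: "\<And>z. z \<in> S \<Longrightarrow> (z - p) \<bullet> n = 0" and Sne: "S \<noteq> {}"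
    and w: "w = (\<lambda>x. if (x - p) \<bullet> n > 0 then infdist x S else 0)"
    and xH: "x \<in> H" and t: "0 \<le> t" and yH: "x + t *\<^sub>R n \<in> H"
  shows "w x \<le> w (x + t *\<^sub>R n) \<and> w (x + t *\<^sub>R n) \<le> w x + t"
proof -
  define y where "y = x + t *\<^sub>R n"
  define hx where "hx = (x - p) \<bullet> n"
  have hy: "(y - p) \<bullet> n = hx + t" unfolding y_def hx_def using nn
    by (simp add: inner_add_left inner_diff_left)
  have dxy: "dist y x = t" unfolding y_def dist_norm using nn t
    by (simp add: norm_eq_sqrt_inner)
  show ?thesis unfolding y_def[symmetric]
  proof (cases "0 < hx")
    case True
    have wx: "w x = infdist x S" and wy: "w y = infdist y S" using True hy t unfolding w hx_def by auto
    have "infdist x S \<le> infdist y S"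
      unfolding infdist_notempty[OF Sne]
    proof (rule cINF_greatest[OF Sne])
      fix z assume z: "z \<in> S"
      have "(x - z) \<bullet> n = (x - p) \<bullet> n - (z - p) \<bullet> n" by (simp add: inner_diff_left)
      then have "0 < (x - z) \<bullet> n" using perp[OF z] True unfolding hx_def by simp
      then have "dist x z \<le> dist y z" unfolding y_def by (rule dist_mono_n[OF nn _ t])
      then show "(INF a\<in>S. dist x a) \<le> dist y z"
        using infdist_le[OF z, of x] unfolding infdist_notempty[OF Sne] by linarith
    qed
    moreover have "infdist y S \<le> infdist x S + t" using infdist_triangle[of y S x] dxy by simp
    ultimately show "w x \<le> w y \<and> w y \<le> w x + t" unfolding wx wy by simp
  next
    case False
    then have wx: "w x = 0" unfolding w hx_def by auto
    show "w x \<le> w y \<and> w y \<le> w x + t"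
    proof (cases "0 < hx + t")
      case False
      then have "w y = 0" using hy unfolding w by auto
      then show ?thesis using wx t by simp
    next
      case True
      have wy: "w y = infdist y S" using True hy unfolding w by auto
      have tp: "0 < t" using True \<open>\<not> 0 < hx\<close> by linarith
      define z where "z = x + (- hx / t) *\<^sub>R ((x + t *\<^sub>R n) - x)"
      have zH: "z \<in> H" unfolding z_def
        by (rule seg_in[OF cH xH yH]) (use tp \<open>\<not> 0 < hx\<close> True in \<open>auto simp: divide_simps\<close>)
      have ze: "z = x + (- hx) *\<^sub>R n" unfolding z_def using tp by simp
      have "(z - p) \<bullet> n = 0" unfolding ze hx_def using nn by (simp add: inner_add_left inner_diff_left)
      then have iz: "infdist z S = 0" using line zH by simp
      have "dist y z = hx + t"
      proof -
        have "x + t *\<^sub>R n - (x + - hx *\<^sub>R n) = (hx + t) *\<^sub>R n" by (simp add: algebra_simps)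
        then show ?thesis unfolding y_def ze dist_norm using nn True by (simp add: norm_eq_sqrt_inner)
      qed
      then have "infdist y S \<le> hx + t" using infdist_triangle[of y S z] iz by simp
      then show ?thesis unfolding wx wy using \<open>\<not> 0 < hx\<close> by (simp add: infdist_nonneg)
    qed
  qed
qed


lemma id3:
  fixes a1 a2 b1 b2 c1 c2 n1 n2 g1 g2 d :: real
  shows "((b2-a2)*n1 - (b1-a1)*n2) * (g1*a1+g2*a2 + (g1*(b1-a1)+g2*(b2-a2))/2 + d)
       + ((c2-b2)*n1 - (c1-b1)*n2) * (g1*b1+g2*b2 + (g1*(c1-b1)+g2*(c2-b2))/2 + d)
       + ((a2-c2)*n1 - (a1-c1)*n2) * (g1*c1+g2*c2 + (g1*(a1-c1)+g2*(a2-c2))/2 + d)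
     = (-1/2)*((a1-b1)*(c2-b2) - (a2-b2)*(c1-b1))*(g1*n1+g2*n2)"
  by (simp add: field_simps)

lemma id1:
  fixes a b c g n :: "real^2"
  shows "((b-a) \<bullet> rot n) * (g \<bullet> a + (g \<bullet> (b-a))/2 + d) + ((c-b) \<bullet> rot n) * (g \<bullet> b + (g \<bullet> (c-b))/2 + d)
     + ((a-c) \<bullet> rot n) * (g \<bullet> c + (g \<bullet> (a-c))/2 + d)
   = (-1/2) * ((a-b)$1 * (c-b)$2 - (a-b)$2 * (c-b)$1) * (g \<bullet> n)"
proof -
  have r: "u \<bullet> rot n = u$2 * n$1 - u$1 * n$2" for u :: "real^2"
    by (simp add: inner2 rot_def)
  show ?thesis unfolding r unfolding inner2 using id3[of "b$2" "a$2" "n$1" "b$1" "a$1" "n$2" "g$1" "g$2" d "c$2" "c$1"]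
    by simp
qed

lemma noncol_det:
  fixes a b c :: "real^2"
  assumes "\<not> collinear {a, b, c}"
  shows "(a-b)$1 * (c-b)$2 - (a-b)$2 * (c-b)$1 \<noteq> 0"
proof
  assume D: "(a-b)$1 * (c-b)$2 - (a-b)$2 * (c-b)$1 = 0"
  define x where "x = a - b"
  define y where "y = c - b"
  have D': "x$1 * y$2 = x$2 * y$1" using D unfolding x_def y_def by simp
  have "collinear {0, x, y}"
  proof (cases "x = 0")
    case True then show ?thesis by (simp add: collinear_lemma)
  next
    case False
    then have "x$1 \<noteq> 0 \<or> x$2 \<noteq> 0" by (simp add: vec_eq_iff forall_2)
    then have "\<exists>k. y = k *\<^sub>R x"
    proof
      assume h: "x$1 \<noteq> 0"
      show ?thesis
        by (rule exI[of _ "y$1 / x$1"]) (use h D' in \<open>auto simp: vec_eq_iff forall_2 field_simps\<close>)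
    next
      assume h: "x$2 \<noteq> 0"
      show ?thesis
        by (rule exI[of _ "y$2 / x$2"]) (use h D' in \<open>auto simp: vec_eq_iff forall_2 field_simps\<close>)
    qed
    then show ?thesis by (simp add: collinear_lemma)
  qed
  then have "collinear {a, b, c}" unfolding x_def y_def by (simp add: collinear_3)
  then show False using assms by simp
qed

lemma lin_aux:
  fixes A1 B1 C1 A2 B2 C2 d e :: real
  assumes "A1 + (B1 - A1)/2 + d = A2 + (B2 - A2)/2 + e" "B1 + (C1 - B1)/2 + d = B2 + (C2 - B2)/2 + e"
    "C1 + (A1 - C1)/2 + d = C2 + (A2 - C2)/2 + e"
  shows "A1 - A2 = B1 - B2" "C1 - C2 = B1 - B2"
proof -
  show "A1 - A2 = B1 - B2" using assms by (simp add: field_simps)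
  show "C1 - C2 = B1 - B2" using assms by (simp add: field_simps)
qed

lemma solve3:
  fixes a b c :: "real^2"
  assumes D: "(a-b)$1 * (c-b)$2 - (a-b)$2 * (c-b)$1 \<noteq> 0"
  shows "\<exists>!g. \<exists>d. g \<bullet> a + (g \<bullet> (b-a))/2 + d = \<alpha>1 \<and> g \<bullet> b + (g \<bullet> (c-b))/2 + d = \<alpha>2
                  \<and> g \<bullet> c + (g \<bullet> (a-c))/2 + d = \<alpha>3"
proof -
  define x where "x = a - b"
  define y where "y = c - b"
  define DD where "DD = x$1 * y$2 - x$2 * y$1"
  have DD: "DD \<noteq> 0" using D unfolding DD_def x_def y_def by simp
  define r1 where "r1 = 2 * (\<alpha>2 - \<alpha>1)"
  define r2 where "r2 = 2 * (\<alpha>3 - \<alpha>1)"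
  define r0 where "r0 = r2 - r1"
  define g :: "real^2" where "g = vector [(r0 * y$2 - r2 * x$2) / DD, (x$1 * r2 - y$1 * r0) / DD]"
  have gx: "g \<bullet> x = r0"
  proof -
    have "g \<bullet> x = ((r0 * y$2 - r2 * x$2) * x$1 + (x$1 * r2 - y$1 * r0) * x$2) / DD"
      unfolding g_def inner2 by (simp add: add_divide_distrib)
    also have "(r0 * y$2 - r2 * x$2) * x$1 + (x$1 * r2 - y$1 * r0) * x$2 = r0 * DD"
      unfolding DD_def by algebra
    finally show ?thesis using DD by simp
  qed
  have gy: "g \<bullet> y = r2"
  proof -
    have "g \<bullet> y = ((r0 * y$2 - r2 * x$2) * y$1 + (x$1 * r2 - y$1 * r0) * y$2) / DD"
      unfolding g_def inner2 by (simp add: add_divide_distrib)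
    also have "(r0 * y$2 - r2 * x$2) * y$1 + (x$1 * r2 - y$1 * r0) * y$2 = r2 * DD"
      unfolding DD_def by algebra
    finally show ?thesis using DD by simp
  qed
  show ?thesis
  proof (rule ex_ex1I)
    show "\<exists>g d. g \<bullet> a + (g \<bullet> (b-a))/2 + d = \<alpha>1 \<and> g \<bullet> b + (g \<bullet> (c-b))/2 + d = \<alpha>2
                  \<and> g \<bullet> c + (g \<bullet> (a-c))/2 + d = \<alpha>3"
    proof -
      define dd where "dd = \<alpha>1 - g \<bullet> a - (g \<bullet> (b-a))/2"
      have gx': "g \<bullet> a - g \<bullet> b = r2 - r1" using gx unfolding x_def r0_def by (simp add: inner_diff_right)
      have gy': "g \<bullet> c - g \<bullet> b = r2" using gy unfolding y_def by (simp add: inner_diff_right)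
      have "g \<bullet> a + (g \<bullet> (b-a))/2 + dd = \<alpha>1"
        unfolding dd_def by simp
      moreover have "g \<bullet> b + (g \<bullet> (c-b))/2 + dd = \<alpha>2"
        using gx' gy' unfolding dd_def inner_diff_right r1_def r2_def by (simp add: field_simps)
      moreover have "g \<bullet> c + (g \<bullet> (a-c))/2 + dd = \<alpha>3"
        using gx' gy' unfolding dd_def inner_diff_right r1_def r2_def by (simp add: field_simps)
      ultimately show ?thesis by blast
    qed
  next
    fix g1 g2 assume
      A: "\<exists>d. g1 \<bullet> a + (g1 \<bullet> (b-a))/2 + d = \<alpha>1 \<and> g1 \<bullet> b + (g1 \<bullet> (c-b))/2 + d = \<alpha>2
                  \<and> g1 \<bullet> c + (g1 \<bullet> (a-c))/2 + d = \<alpha>3" and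
      B: "\<exists>d. g2 \<bullet> a + (g2 \<bullet> (b-a))/2 + d = \<alpha>1 \<and> g2 \<bullet> b + (g2 \<bullet> (c-b))/2 + d = \<alpha>2
                  \<and> g2 \<bullet> c + (g2 \<bullet> (a-c))/2 + d = \<alpha>3"
    define z where "z = g1 - g2"
    obtain d1 where d1: "g1 \<bullet> a + (g1 \<bullet> (b-a))/2 + d1 = \<alpha>1" "g1 \<bullet> b + (g1 \<bullet> (c-b))/2 + d1 = \<alpha>2"
                  "g1 \<bullet> c + (g1 \<bullet> (a-c))/2 + d1 = \<alpha>3" using A by blast
    obtain d2 where d2: "g2 \<bullet> a + (g2 \<bullet> (b-a))/2 + d2 = \<alpha>1" "g2 \<bullet> b + (g2 \<bullet> (c-b))/2 + d2 = \<alpha>2"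
                  "g2 \<bullet> c + (g2 \<bullet> (a-c))/2 + d2 = \<alpha>3" using B by blast
    have L: "g1 \<bullet> a - g2 \<bullet> a = g1 \<bullet> b - g2 \<bullet> b" "g1 \<bullet> c - g2 \<bullet> c = g1 \<bullet> b - g2 \<bullet> b"
      using lin_aux[of "g1 \<bullet> a" "g1 \<bullet> b" d1 "g2 \<bullet> a" "g2 \<bullet> b" d2 "g1 \<bullet> c" "g2 \<bullet> c"] d1 d2
      by (simp_all add: inner_diff_right)
    have zx: "z \<bullet> x = 0" and zy: "z \<bullet> y = 0" using L unfolding z_def x_def y_def
      by (simp_all add: inner_diff_right inner_diff_left)
    have zx': "z$1 * x$1 + z$2 * x$2 = 0" using zx by (simp add: inner2)
    have zy': "z$1 * y$1 + z$2 * y$2 = 0" using zy by (simp add: inner2)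
    have "z$1 * DD = y$2 * (z$1 * x$1 + z$2 * x$2) - x$2 * (z$1 * y$1 + z$2 * y$2)"
      unfolding DD_def by algebra
    then have z1: "z$1 = 0" using zx' zy' DD by simp
    have "z$2 * DD = x$1 * (z$1 * y$1 + z$2 * y$2) - y$1 * (z$1 * x$1 + z$2 * x$2)"
      unfolding DD_def by algebra
    then have z2: "z$2 = 0" using zx' zy' DD by simp
    have "z = 0" using z1 z2 by (simp add: vec_eq_iff forall_2)
    then show "g1 = g2" unfolding z_def by simp
  qed
qed


lemma edge_Iseg: "edge_integral A B f = norm (B - A) * Iseg A B f"
  by (simp add: edge_integral_def Iseg_def)

theorem lemma4p3:
  fixes a b c p q n :: "real^2" and T Tplus Tminus :: "(real^2) set" and w :: "real^2 \<Rightarrow> real"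
  assumes tri: "\<not> collinear {a, b, c}"
    and T_def: "T = interior (convex hull {a, b, c})"
    and pq: "p \<noteq> q" "p \<in> frontier T" "q \<in> frontier T"
    and seg: "open_segment p q \<subseteq> T"
    and n_unit: "norm n = 1" and n_orth: "n \<bullet> (q - p) = 0"
    and Tplus_def: "Tplus = {x \<in> T. (x - p) \<bullet> n > 0}"
    and Tminus_def: "Tminus = {x \<in> T. (x - p) \<bullet> n < 0}"
    and nonempty: "Tplus \<noteq> {}" "Tminus \<noteq> {}"
    and w_def: "w = (\<lambda>x. if (x - p) \<bullet> n > 0 then infdist x (open_segment p q) else 0)"
  shows "0 \<le> cr_grad a b c w \<bullet> n \<and> cr_grad a b c w \<bullet> n \<le> 1"
proof -
  define H where "H = convex hull {a, b, c}"
  define S where "S = open_segment p q"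
  define hn where "hn = (\<lambda>x::real^2. n \<bullet> x)"
  have nn: "n \<bullet> n = 1" using n_unit by (simp add: norm_eq_1)
  have cH: "convex H" unfolding H_def by (rule convex_convex_hull)
  have clH: "closed H" unfolding H_def
    by (intro compact_imp_closed compact_convex_hull finite_imp_compact) simp
  have aH: "a \<in> H" and bH: "b \<in> H" and cH': "c \<in> H" unfolding H_def by (auto intro: hull_inc)
  have Tne: "T \<noteq> {}" using nonempty(1) Tplus_def by auto
  have TI: "T = interior H" using T_def H_def by simp
  have clT: "closure T = H"
    using convex_closure_interior[OF cH] TI Tne closure_closed[OF clH] by simp
  have Topen: "open T" using TI by simp
  have fr: "frontier T = H - T" unfolding frontier_def using clT interior_open[OF Topen] by simp
  have pH: "p \<in> H" "p \<notin> T" and qH: "q \<in> H" "q \<notin> T" using pq(2,3) fr by auto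
  have line: "\<And>x. x \<in> H \<Longrightarrow> (x - p) \<bullet> n = 0 \<Longrightarrow> infdist x S = 0"
    unfolding S_def by (rule line_in_seg[OF nn pq(1) n_orth TI cH clH pH(2) qH(2) seg])
  have Sne: "S \<noteq> {}"
  proof
    assume "S = {}"
    then have "closure S = {}" by simp
    moreover have "closure S = closed_segment p q" using pq(1) by (simp add: S_def)
    ultimately show False by (metis empty_iff ends_in_segment(1))
  qed
  have perp: "\<And>z. z \<in> S \<Longrightarrow> (z - p) \<bullet> n = 0" using seg_perp n_orth unfolding S_def by blast
  have wS: "w = (\<lambda>x. if (x - p) \<bullet> n > 0 then infdist x S else 0)" unfolding S_def by (rule w_def)
  have wc: "continuous_on H w" unfolding wS by (rule w_cont[OF line])
  have wm: "\<And>x t. x \<in> H \<Longrightarrow> 0 \<le> t \<Longrightarrow> x + t *\<^sub>R n \<in> H \<Longrightarrow>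
              w x \<le> w (x + t *\<^sub>R n) \<and> w (x + t *\<^sub>R n) \<le> w x + t"
    by (rule w_mono[OF nn cH line perp Sne wS])
  have hc: "continuous_on H hn" unfolding hn_def by (intro continuous_intros)
  have hv: "hn (x + t *\<^sub>R n) = hn x + t" for x t unfolding hn_def using nn by (simp add: inner_add_right)
  define v where "v = (\<lambda>x. hn x - w x)"
  have vc: "continuous_on H v" unfolding v_def by (intro continuous_on_diff hc wc)
  have P1: "0 \<le> FF a b c (rot n) w * FF a b c (rot n) hn"
    by (rule prod_any[OF nn H_def wc hc]) (use wm hv in auto)
  have P2: "0 \<le> FF a b c (rot n) v * FF a b c (rot n) hn"
  proof (rule prod_any[OF nn H_def vc hc])
    fix x t assume "x \<in> H" "0 \<le> t" "x + t *\<^sub>R n \<in> H"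
    then show "v x \<le> v (x + t *\<^sub>R n)" using wm[of x t] hv[of x t] unfolding v_def by simp
  next
    fix x t assume "x \<in> H" "0 \<le> t" "x + t *\<^sub>R n \<in> H"
    then show "hn x \<le> hn (x + t *\<^sub>R n)" using hv[of x t] by simp
  qed
  have Iv: "Iseg A B v = Iseg A B hn - Iseg A B w" if "A \<in> H" "B \<in> H" for A B
    unfolding Iseg_def v_def
    by (rule integral_diff[OF seg_int[OF cH that hc] seg_int[OF cH that wc]])
  have FFv: "FF a b c (rot n) v = FF a b c (rot n) hn - FF a b c (rot n) w"
    unfolding FF_def Iv[OF aH bH] Iv[OF bH cH'] Iv[OF cH' aH] by (simp add: algebra_simps)
  have Ih: "Iseg A B hn = n \<bullet> A + (n \<bullet> (B - A)) / 2" for A B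
    using Iseg_affine[of A B n 0] unfolding hn_def by simp
  define DD where "DD = (a-b)$1 * (c-b)$2 - (a-b)$2 * (c-b)$1"
  have DD: "DD \<noteq> 0" unfolding DD_def by (rule noncol_det[OF tri])
  define K where "K = FF a b c (rot n) hn"
  have Kv: "K = (-1/2) * DD" unfolding K_def FF_def Ih DD_def
    using id1[where a=a and b=b and c=c and g=n and d=0 and n=n] nn by simp
  have Kne: "K \<noteq> 0" using Kv DD by simp
  have ab: "a \<noteq> b"
  proof
    assume "a = b" then have "{a, b, c} = {a, c}" by auto
    then show False using tri collinear_2 by metis
  qed
  have bc: "b \<noteq> c"
  proof
    assume "b = c" then have "{a, b, c} = {a, b}" by auto
    then show False using tri collinear_2 by metis
  qed
  have ca: "c \<noteq> a"
  proof
    assume "c = a" then have "{a, b, c} = {a, b}" by auto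
    then show False using tri collinear_2 by metis
  qed
  define \<alpha>1 where "\<alpha>1 = Iseg a b w"
  define \<alpha>2 where "\<alpha>2 = Iseg b c w"
  define \<alpha>3 where "\<alpha>3 = Iseg c a w"
  have eqv: "(edge_integral a b (\<lambda>x. g \<bullet> x + d) = edge_integral a b w \<and>
      edge_integral b c (\<lambda>x. g \<bullet> x + d) = edge_integral b c w \<and>
      edge_integral c a (\<lambda>x. g \<bullet> x + d) = edge_integral c a w) \<longleftrightarrow>
      (g \<bullet> a + (g \<bullet> (b-a))/2 + d = \<alpha>1 \<and> g \<bullet> b + (g \<bullet> (c-b))/2 + d = \<alpha>2
                  \<and> g \<bullet> c + (g \<bullet> (a-c))/2 + d = \<alpha>3)" for g d
    unfolding edge_Iseg Iseg_affine \<alpha>1_def \<alpha>2_def \<alpha>3_def using ab bc ca by simp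
  have ex1: "\<exists>!g. \<exists>d. edge_integral a b (\<lambda>x. g \<bullet> x + d) = edge_integral a b w \<and>
      edge_integral b c (\<lambda>x. g \<bullet> x + d) = edge_integral b c w \<and>
      edge_integral c a (\<lambda>x. g \<bullet> x + d) = edge_integral c a w"
    unfolding eqv by (rule solve3[OF DD[unfolded DD_def]])
  define G where "G = cr_grad a b c w"
  have "\<exists>d. edge_integral a b (\<lambda>x. G \<bullet> x + d) = edge_integral a b w \<and>
      edge_integral b c (\<lambda>x. G \<bullet> x + d) = edge_integral b c w \<and>
      edge_integral c a (\<lambda>x. G \<bullet> x + d) = edge_integral c a w"
    unfolding G_def cr_grad_def by (rule theI'[OF ex1])
  then obtain d where Gd: "G \<bullet> a + (G \<bullet> (b-a))/2 + d = \<alpha>1" "G \<bullet> b + (G \<bullet> (c-b))/2 + d = \<alpha>2"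
     "G \<bullet> c + (G \<bullet> (a-c))/2 + d = \<alpha>3" unfolding eqv by blast
  have FFw: "FF a b c (rot n) w = (G \<bullet> n) * K"
  proof -
    have "FF a b c (rot n) w = (-1/2) * DD * (G \<bullet> n)"
      unfolding FF_def \<alpha>1_def[symmetric] \<alpha>2_def[symmetric] \<alpha>3_def[symmetric] Gd[symmetric] DD_def
      by (rule id1)
    then show ?thesis unfolding Kv by simp
  qed
  define \<gamma> where "\<gamma> = G \<bullet> n"
  have KK: "0 < K * K" using Kne not_real_square_gt_zero by blast
  have "0 \<le> \<gamma> * (K * K)" using P1 unfolding FFw K_def[symmetric] \<gamma>_def by (simp add: algebra_simps)
  then have g0: "0 \<le> \<gamma>" using KK by (simp add: zero_le_mult_iff)
  have "0 \<le> (1 - \<gamma>) * (K * K)" using P2 unfolding FFv FFw K_def[symmetric] \<gamma>_def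
    by (simp add: algebra_simps)
  then have g1: "\<gamma> \<le> 1" using KK by (simp add: zero_le_mult_iff)
  show ?thesis using g0 g1 unfolding \<gamma>_def G_def by simp
qed


end
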